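(* Let $\mathcal{N}=\mathcal{N}_s\cup\mathcal{N}_b$ be a finite set of prosumers, partitioned into disjoint sets of sellers $\mathcal{N}_s$ and buyers $\mathcal{N}_b$. Each seller $n\in\mathcal{N}_s$ has a surplus energy $E_{n,\text{sur}}\ge 0$ and each buyer $m\in\mathcal{N}_b$ has a deficit energy $E_{m,\text{def}}\ge 0$. Let $0\le p_{s,g}<p_{b,g}$ be the grid's selling (feed-in) price and buying price per unit of energy. For a coalition $\mathcal{S}\subseteq\mathcal{N}$ put $$z(\mathcal{S})=\sum_{n\in\mathcal{S}\cap\mathcal{N}_s}E_{n,\text{sur}}-\sum_{m\in\mathcal{S}\cap\mathcal{N}_b}E_{m,\text{def}},\qquad \nu(\mathcal{S})=p_{s,g}\max\bigl(0,z(\mathcal{S})\bigr)-p_{b,g}\max\bigl(0,-z(\mathcal{S})\bigr).$$ Then $\nu$ is superadditive: for any two disjoint subsets $\mathcal{N}_a,\mathcal{N}_c\subseteq\mathcal{N}$, $$\nu(\mathcal{N}_a\cup\mathcal{N}_c)\ge\nu(\mathcal{N}_a)+\nu(\mathcal{N}_c).$$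
   Context: This is the value function of a canonical coalition game with transferable utility $\Gamma=\{\mathcal{N},\nu\}$ modelling peer-to-peer energy trading: within a coalition, sellers' surplus first covers buyers' deficits, any remaining surplus is sold to the grid at price $p_{s,g}$, and any remaining deficit is bought from the grid at price $p_{b,g}$. Here $E_{n,\text{sur}}=E_{n,\text{pv}}-\min(E_{n,d},E_{n,\text{pv}})$ and $E_{n,\text{def}}=E_{n,d}-\min(E_{n,d},E_{n,\text{pv}})$, where $E_{n,\text{pv}}$ is the prosumer's solar generation and $E_{n,d}$ its demand. *)

theory Defs
  imports Main "HOL.Real"
begin

definition net_energy :: "'a set \<Rightarrow> 'a set \<Rightarrow> ('a \<Rightarrow> real) \<Rightarrow> ('a \<Rightarrow> real) \<Rightarrow> 'a set \<Rightarrow> real" where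
  "net_energy Ns Nb Esur Edef S = (\<Sum>n\<in>S \<inter> Ns. Esur n) - (\<Sum>m\<in>S \<inter> Nb. Edef m)"

definition coalition_value ::
  "real \<Rightarrow> real \<Rightarrow> 'a set \<Rightarrow> 'a set \<Rightarrow> ('a \<Rightarrow> real) \<Rightarrow> ('a \<Rightarrow> real) \<Rightarrow> 'a set \<Rightarrow> real" where
  "coalition_value psg pbg Ns Nb Esur Edef S =
     (let z = net_energy Ns Nb Esur Edef S in psg * max 0 z - pbg * max 0 (- z))"

end

theory Submission
  imports Defs
begin

theorem theorem1:
  fixes N Ns Nb :: "'a set" and Esur Edef :: "'a \<Rightarrow> real" and psg pbg :: real
    and Na Nc :: "'a set"
  assumes "finite N"
    and "N = Ns \<union> Nb" and "Ns \<inter> Nb = {}"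
    and "\<And>n. n \<in> Ns \<Longrightarrow> Esur n \<ge> 0"
    and "\<And>m. m \<in> Nb \<Longrightarrow> Edef m \<ge> 0"
    and "0 \<le> psg" and "psg < pbg"
    and "Na \<subseteq> N" and "Nc \<subseteq> N" and "Na \<inter> Nc = {}"
  shows "coalition_value psg pbg Ns Nb Esur Edef (Na \<union> Nc)
           \<ge> coalition_value psg pbg Ns Nb Esur Edef Na + coalition_value psg pbg Ns Nb Esur Edef Nc"
proof -
  have fa: "finite Na" "finite Nc" using assms(1,8,9) finite_subset by auto
  have d: "(Na \<inter> X) \<inter> (Nc \<inter> X) = {}" for X using assms(10) by blast
  have u: "(Na \<union> Nc) \<inter> X = (Na \<inter> X) \<union> (Nc \<inter> X)" for X by blast
  have s1: "(\<Sum>n\<in>(Na \<union> Nc) \<inter> Ns. Esur n) = (\<Sum>n\<in>Na \<inter> Ns. Esur n) + (\<Sum>n\<in>Nc \<inter> Ns. Esur n)"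
    unfolding u by (rule sum.union_disjoint) (use fa d in auto)
  have s2: "(\<Sum>n\<in>(Na \<union> Nc) \<inter> Nb. Edef n) = (\<Sum>n\<in>Na \<inter> Nb. Edef n) + (\<Sum>n\<in>Nc \<inter> Nb. Edef n)"
    unfolding u by (rule sum.union_disjoint) (use fa d in auto)
  have z: "net_energy Ns Nb Esur Edef (Na \<union> Nc) = net_energy Ns Nb Esur Edef Na + net_energy Ns Nb Esur Edef Nc"
    unfolding net_energy_def s1 s2 by simp
  have f: "psg * max 0 (a+b) - pbg * max 0 (-(a+b)) \<ge> (psg * max 0 a - pbg * max 0 (-a)) + (psg * max 0 b - pbg * max 0 (-b))" for a b :: real
  proof -
    have e: "psg * max 0 x - pbg * max 0 (-x) = min (psg*x) (pbg*x)" for x :: real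
      using assms(6,7) by (cases "x \<ge> 0") (auto simp: min_def max_def intro: mult_right_mono mult_right_mono_neg)
    show ?thesis unfolding e by (auto simp: min_def distrib_left)
  qed
  show ?thesis unfolding coalition_value_def Let_def z by (rule f)
qed

end
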